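(* Let $r>\frac23$, $D>0$, $\mu\in\mathbb{R}$, $c<u_b(r)$ be fixed and consider the system $$\dot q=s,\qquad \dot s=\frac{1}{D}\big((u+\mu)s-f(q,u;r)\big),\qquad \dot u=\frac{\epsilon}{u-c}\,g(q,u)$$ with $f(q,u;r)=q\big(r+u-2-(r+0.1)(q-1)^2\big)$, $g(q,u)=2-u+2q(1-u)$, and its equilibria $X_1=(0,0,2)$, $X_2=(q_{b,+}(r),0,u_b(r))$. Then for $\epsilon>0$ sufficiently small and $k\in\{1,2\}$: (1) the stable manifold $W^s(X_k)$ has dimension $2$ and the unstable manifold $W^u(X_k)$ has dimension $1$; (2) the eigenvalues $\lambda_1^\epsilon(X_k),\lambda_2^\epsilon(X_k),\lambda_3^\epsilon(X_k)$ of the linearization at $X_k$ are real and satisfy (a) $\lambda_1^\epsilon(X_k)<\lambda_2^\epsilon(X_k)<0<\lambda_3^\epsilon(X_k)$, (b) $-\lambda_2^\epsilon(X_k)<\lambda_3^\epsilon(X_k)$, and (c) all three are simple eigenvalues.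
   Context: For $r>\frac23$, $u_b(r)\in(\frac65,\frac43)$ denotes the unique value of $u$ in $(\frac65,\frac43)$ such that, with $q_{b,+}(r)=1+\sqrt{\frac{r+u_b(r)-2}{r+0.1}}>1$, one has $g(q_{b,+}(r),u_b(r))=0$. The system is the traveling-wave ODE of the Barkley pipe-flow model, with $\mu=-(\zeta+c)$, $c$ the wave speed. *)

theory Defs
  imports "HOL-Analysis.Analysis"
begin

text \<open>Nonlinearities of the Barkley pipe-flow traveling-wave ODE.\<close>

definition f_B :: "real \<Rightarrow> real \<Rightarrow> real \<Rightarrow> real" where
  "f_B q u r = q * (r + u - 2 - (r + 0.1) * (q - 1)^2)"

definition g_B :: "real \<Rightarrow> real \<Rightarrow> real" where
  "g_B q u = 2 - u + 2 * q * (1 - u)"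

text \<open>q_{b,+} as a function of r and u (used with u = u_b(r)).\<close>
definition qplus :: "real \<Rightarrow> real \<Rightarrow> real" where
  "qplus r u = 1 + sqrt ((r + u - 2) / (r + 0.1))"

text \<open>u_b(r): the unique u in (6/5,4/3) with g(q_{b,+}(r),u)=0.\<close>
definition u_b :: "real \<Rightarrow> real" where
  "u_b r = (THE u. 6/5 < u \<and> u < 4/3 \<and> g_B (qplus r u) u = 0)"

definition q_bp :: "real \<Rightarrow> real" where
  "q_bp r = qplus r (u_b r)"

text \<open>Points of R^3 with coordinates (q,s,u).\<close>
definition vec3 :: "real \<Rightarrow> real \<Rightarrow> real \<Rightarrow> real^3" where
  "vec3 a b d = (\<chi> i. if i = 1 then a else if i = 2 then b else d)"

text \<open>The vector field: q' = s, s' = ((u+mu) s - f(q,u;r))/D, u' = eps/(u-c) g(q,u).\<close>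
definition barkley_field ::
  "real \<Rightarrow> real \<Rightarrow> real \<Rightarrow> real \<Rightarrow> real \<Rightarrow> real^3 \<Rightarrow> real^3" where
  "barkley_field r D mu c eps X =
     vec3 (X$2)
          (((X$3 + mu) * X$2 - f_B (X$1) (X$3) r) / D)
          (eps / (X$3 - c) * g_B (X$1) (X$3))"

definition X1 :: "real^3" where "X1 = vec3 0 0 2"

definition X2 :: "real \<Rightarrow> real^3" where "X2 r = vec3 (q_bp r) 0 (u_b r)"

text \<open>Stable / unstable subspaces of a linear vector field L (the tangent spaces
  of the stable / unstable manifolds at the equilibrium): initial values of
  solutions of x' = L x tending to 0 as t \<rightarrow> +\<infinity> (resp. -\<infinity>).\<close>
definition stable_subspace :: "(real^3 \<Rightarrow> real^3) \<Rightarrow> (real^3) set" where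
  "stable_subspace L = {v. \<exists>x. x 0 = v \<and> (\<forall>t. (x has_vector_derivative L (x t)) (at t))
                               \<and> (x \<longlongrightarrow> 0) at_top}"

definition unstable_subspace :: "(real^3 \<Rightarrow> real^3) \<Rightarrow> (real^3) set" where
  "unstable_subspace L = {v. \<exists>x. x 0 = v \<and> (\<forall>t. (x has_vector_derivative L (x t)) (at t))
                               \<and> (x \<longlongrightarrow> 0) at_bot}"

end

theory Submission
  imports Defs
begin

lemma scalar_ode_zero:
  fixes y :: "real \<Rightarrow> real" and F :: "real filter"
  assumes d: "\<And>t. (y has_real_derivative l * y t) (at t)"
  and lim: "(y \<longlongrightarrow> 0) F" and F: "F \<noteq> bot" and ev: "eventually (\<lambda>t. exp (l*t) \<ge> 1) F"
  shows "y 0 = 0"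
proof -
  define h where "h t = exp (-(l*t)) * y t" for t
  have "DERIV h t :> 0" for t
  proof -
    have e: "((\<lambda>t. exp (-(l*t))) has_real_derivative exp(-(l*t)) * (-l)) (at t)"
      by (rule derivative_eq_intros refl | simp)+
    show ?thesis unfolding h_def using DERIV_mult[OF e d[of t]] by (simp add: algebra_simps)
  qed
  then have hc: "h t = h 0" for t by (intro DERIV_isconst_all) blast
  have yt: "y t = exp (l*t) * y 0" for t
    using hc[of t] by (simp add: h_def exp_minus field_simps)
  have "eventually (\<lambda>t. \<bar>y 0\<bar> \<le> \<bar>y t\<bar>) F"
    using ev
  proof eventually_elim
    case (elim t)
    have "\<bar>y t\<bar> = exp (l*t) * \<bar>y 0\<bar>" unfolding yt[of t] by (simp add: abs_mult)
    moreover have "1 * \<bar>y 0\<bar> \<le> exp (l*t) * \<bar>y 0\<bar>"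
      by (rule mult_right_mono[OF elim]) simp
    ultimately show ?case by simp
  qed
  moreover have "((\<lambda>t. \<bar>y t\<bar>) \<longlongrightarrow> 0) F" using tendsto_rabs[OF lim] by simp
  ultimately have "\<bar>y 0\<bar> \<le> 0" using tendsto_lowerbound[OF _ _ F] by metis
  then show ?thesis by simp
qed

lemma inner_ode:
  fixes x :: "real \<Rightarrow> real^3"
  assumes "\<forall>t. (x has_vector_derivative L (x t)) (at t)"
  and "\<And>z. w \<bullet> L z = l * (w \<bullet> z)"
  shows "((\<lambda>t. w \<bullet> x t) has_real_derivative l * (w \<bullet> x t)) (at t)"
proof -
  have "((\<lambda>t. w \<bullet> x t) has_vector_derivative w \<bullet> L (x t)) (at t)"
    by (rule bounded_linear.has_vector_derivative[OF bounded_linear_inner_right]) (use assms in auto)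
  then show ?thesis using assms(2) by (simp add: has_real_derivative_iff_has_vector_derivative)
qed

lemma eig_sol:
  fixes L :: "real^3 \<Rightarrow> real^3"
  assumes "linear L" "L v = l *\<^sub>R v"
  shows "((\<lambda>t. exp (l*t) *\<^sub>R v) has_vector_derivative L (exp (l*t) *\<^sub>R v)) (at t)"
proof -
  have "L (exp (l*t) *\<^sub>R v) = (l * exp (l*t)) *\<^sub>R v"
    using assms by (simp add: linear_scale)
  moreover have "((\<lambda>t. exp (l*t) *\<^sub>R v) has_vector_derivative (l * exp (l*t)) *\<^sub>R v) (at t)"
    by (rule derivative_eq_intros refl | simp)+
  ultimately show ?thesis by simp
qed

lemma lin_bot: "(l::real) < 0 \<Longrightarrow> filterlim (\<lambda>t. l*t) at_bot at_top"
  by (rule filterlim_tendsto_neg_mult_at_bot[OF tendsto_const _ filterlim_ident])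

lemma exp_top: "(l::real) < 0 \<Longrightarrow> ((\<lambda>t. exp (l*t)) \<longlongrightarrow> 0) at_top"
  using filterlim_compose[OF exp_at_bot lin_bot] by blast
lemma exp_bot: "(l::real) > 0 \<Longrightarrow> ((\<lambda>t. exp (l*t)) \<longlongrightarrow> 0) at_bot"
  unfolding filterlim_at_bot_mirror using exp_top[of "-l"] by simp


lemma orth_eig:
  fixes u v w :: "real^3"
  assumes "w \<bullet> u = a * (w \<bullet> v)" "u = b *\<^sub>R v" "a \<noteq> b"
  shows "w \<bullet> v = 0"
proof -
  have "a * (w \<bullet> v) = b * (w \<bullet> v)" using assms(1,2) by (metis inner_scaleR_right)
  then have "(a - b) * (w \<bullet> v) = 0" by (simp add: algebra_simps)
  then show ?thesis using assms(3) by simp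
qed

lemma span_orth:
  fixes w :: "real^3"
  assumes "x \<in> span S" "\<forall>s\<in>S. w \<bullet> s = 0"
  shows "w \<bullet> x = 0"
  using span_minimal[of S "{x. w \<bullet> x = 0}"] subspace_hyperplane[of w] assms by auto

lemma decomp3:
  fixes v1 v2 v3 :: "real^3"
  assumes "independent {v1,v2,v3}" "card {v1,v2,v3} = 3"
  shows "\<exists>c1 c2 c3. x = c1 *\<^sub>R v1 + c2 *\<^sub>R v2 + c3 *\<^sub>R v3"
proof -
  have "UNIV \<subseteq> span {v1,v2,v3}"
    using card_eq_dim[of "{v1,v2,v3}" UNIV] assms by simp
  then have "x \<in> span {v1,v2,v3}" by auto
  then obtain k3 where "x - k3 *\<^sub>R v3 \<in> span {v1,v2}"
    by (metis insert_commute span_breakdown_eq)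
  then obtain k2 where "x - k3 *\<^sub>R v3 - k2 *\<^sub>R v2 \<in> span {v1}"
    by (metis span_breakdown_eq insert_commute)
  then obtain k1 where "x - k3 *\<^sub>R v3 - k2 *\<^sub>R v2 - k1 *\<^sub>R v1 \<in> span {}"
    by (metis span_breakdown_eq)
  then have "x = k1 *\<^sub>R v1 + k2 *\<^sub>R v2 + k3 *\<^sub>R v3" by (simp add: algebra_simps)
  then show ?thesis by blast
qed

lemma subspaces3:
  fixes L :: "real^3 \<Rightarrow> real^3" and va vb vc wa wb wc :: "real^3" and la lb lc :: real
  assumes lin: "linear L"
  and ev1: "L va = la *\<^sub>R va" and ev2: "L vb = lb *\<^sub>R vb" and ev3: "L vc = lc *\<^sub>R vc"
  and lw1: "\<And>x. wa \<bullet> L x = la * (wa \<bullet> x)"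
  and lw2: "\<And>x. wb \<bullet> L x = lb * (wb \<bullet> x)"
  and lw3: "\<And>x. wc \<bullet> L x = lc * (wc \<bullet> x)"
  and n1: "wa \<bullet> va \<noteq> 0" and n2: "wb \<bullet> vb \<noteq> 0" and n3: "wc \<bullet> vc \<noteq> 0"
  and l12: "la < lb" and lb: "lb < 0" and lc: "0 < lc"
  shows "dim (stable_subspace L) = 2 \<and> dim (unstable_subspace L) = 1"
proof -
  have o12: "wa \<bullet> vb = 0" by (rule orth_eig[OF lw1[of vb] ev2]) (use l12 in simp)
  have o13: "wa \<bullet> vc = 0" by (rule orth_eig[OF lw1[of vc] ev3]) (use l12 lb lc in simp)
  have o21: "wb \<bullet> va = 0" by (rule orth_eig[OF lw2[of va] ev1]) (use l12 in simp)
  have o23: "wb \<bullet> vc = 0" by (rule orth_eig[OF lw2[of vc] ev3]) (use lb lc in simp)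
  have o31: "wc \<bullet> va = 0" by (rule orth_eig[OF lw3[of va] ev1]) (use l12 lb lc in simp)
  have o32: "wc \<bullet> vb = 0" by (rule orth_eig[OF lw3[of vb] ev2]) (use lb lc in simp)
  have nz1: "va \<noteq> 0" using n1 by auto
  have d12: "va \<noteq> vb" using n1 o12 by auto
  have d13: "va \<noteq> vc" using n1 o13 by auto
  have d23: "vb \<noteq> vc" using n2 o23 by auto
  have i1: "independent {va}" using nz1 by (simp add: independent_insert)
  have "vb \<notin> span {va}" using span_orth[of vb "{va}" wb] o21 n2 by auto
  then have i12: "independent {va,vb}" using i1 by (metis insert_commute independent_insertI)
  have "vc \<notin> span {va,vb}" using span_orth[of vc "{va,vb}" wc] o31 o32 n3 by auto
  then have i123: "independent {va,vb,vc}" using i12 by (metis insert_commute independent_insertI)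
  have c3: "card {va,vb,vc} = 3" using d12 d13 d23 by simp
  have c2: "card {va,vb} = 2" using d12 by simp
  note dec = decomp3[OF i123 c3]
  \<comment> \<open>stable\<close>
  have s1: "v \<in> stable_subspace L" if "L v = l *\<^sub>R v" "l < 0" for v l
    unfolding stable_subspace_def
  proof (intro CollectI exI conjI allI)
    show "(\<lambda>t. exp (l*t) *\<^sub>R v) 0 = v" by simp
    show "((\<lambda>t. exp (l*t) *\<^sub>R v) has_vector_derivative L ((\<lambda>t. exp (l*t) *\<^sub>R v) t)) (at t)" for t
      using eig_sol[OF lin that(1)] by simp
    show "((\<lambda>t. exp (l*t) *\<^sub>R v) \<longlongrightarrow> 0) at_top"
      using tendsto_scaleR[OF exp_top[OF that(2)] tendsto_const[of v]] by simp
  qed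
  have u1: "v \<in> unstable_subspace L" if "L v = l *\<^sub>R v" "l > 0" for v l
    unfolding unstable_subspace_def
  proof (intro CollectI exI conjI allI)
    show "(\<lambda>t. exp (l*t) *\<^sub>R v) 0 = v" by simp
    show "((\<lambda>t. exp (l*t) *\<^sub>R v) has_vector_derivative L ((\<lambda>t. exp (l*t) *\<^sub>R v) t)) (at t)" for t
      using eig_sol[OF lin that(1)] by simp
    show "((\<lambda>t. exp (l*t) *\<^sub>R v) \<longlongrightarrow> 0) at_bot"
      using tendsto_scaleR[OF exp_bot[OF that(2)] tendsto_const[of v]] by simp
  qed
  have s2: "w \<bullet> v = 0" if "v \<in> stable_subspace L" "\<And>x. w \<bullet> L x = l * (w \<bullet> x)" "l > 0" for v w l
  proof -
    have "\<exists>x. x 0 = v \<and> (\<forall>t. (x has_vector_derivative L (x t)) (at t)) \<and> (x \<longlongrightarrow> 0) at_top"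
      using that(1) by (simp add: stable_subspace_def)
    then obtain x where x: "x 0 = v" "\<forall>t. (x has_vector_derivative L (x t)) (at t)" "(x \<longlongrightarrow> 0) at_top"
      by blast
    have "(\<lambda>t. w \<bullet> x t) 0 = 0"
    proof (rule scalar_ode_zero)
      show "((\<lambda>t. w \<bullet> x t) has_real_derivative l * (w \<bullet> x t)) (at t)" for t
        by (rule inner_ode[OF x(2) that(2)])
      show "((\<lambda>t. w \<bullet> x t) \<longlongrightarrow> 0) at_top"
        using tendsto_inner[OF tendsto_const[of w] x(3)] by simp
      show "(at_top::real filter) \<noteq> bot" by simp
      show "eventually (\<lambda>t. exp (l*t) \<ge> 1) at_top"
        using eventually_ge_at_top[of "0::real"]
        by eventually_elim (use that(3) in simp)
    qed
    then show ?thesis using x(1) by simp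
  qed
  have u2: "w \<bullet> v = 0" if "v \<in> unstable_subspace L" "\<And>x. w \<bullet> L x = l * (w \<bullet> x)" "l < 0" for v w l
  proof -
    have "\<exists>x. x 0 = v \<and> (\<forall>t. (x has_vector_derivative L (x t)) (at t)) \<and> (x \<longlongrightarrow> 0) at_bot"
      using that(1) by (simp add: unstable_subspace_def)
    then obtain x where x: "x 0 = v" "\<forall>t. (x has_vector_derivative L (x t)) (at t)" "(x \<longlongrightarrow> 0) at_bot"
      by blast
    have "(\<lambda>t. w \<bullet> x t) 0 = 0"
    proof (rule scalar_ode_zero)
      show "((\<lambda>t. w \<bullet> x t) has_real_derivative l * (w \<bullet> x t)) (at t)" for t
        by (rule inner_ode[OF x(2) that(2)])
      show "((\<lambda>t. w \<bullet> x t) \<longlongrightarrow> 0) at_bot"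
        using tendsto_inner[OF tendsto_const[of w] x(3)] by simp
      show "(at_bot::real filter) \<noteq> bot" by simp
      show "eventually (\<lambda>t. exp (l*t) \<ge> 1) at_bot"
        using eventually_le_at_bot[of "0::real"]
        by eventually_elim (use that(3) in \<open>simp add: mult_nonpos_nonpos\<close>)
    qed
    then show ?thesis using x(1) by simp
  qed
  have S1: "stable_subspace L \<subseteq> span {va,vb}"
  proof
    fix v assume v: "v \<in> stable_subspace L"
    have w3v: "wc \<bullet> v = 0" by (rule s2[OF v lw3 lc])
    obtain c1 c2 c3 where c: "v = c1 *\<^sub>R va + c2 *\<^sub>R vb + c3 *\<^sub>R vc" using dec by blast
    have "wc \<bullet> v = c3 * (wc \<bullet> vc)" unfolding c by (simp add: inner_add_right o31 o32)
    then have "c3 = 0" using w3v n3 by simp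
    then show "v \<in> span {va,vb}" unfolding c
      by (simp add: span_add span_scale span_base)
  qed
  have S2: "{va,vb} \<subseteq> stable_subspace L" using s1[OF ev1] s1[OF ev2] l12 lb by auto
  have U1: "unstable_subspace L \<subseteq> span {vc}"
  proof
    fix v assume v: "v \<in> unstable_subspace L"
    have w1v: "wa \<bullet> v = 0" by (rule u2[OF v lw1]) (use l12 lb in simp)
    have w2v: "wb \<bullet> v = 0" by (rule u2[OF v lw2 lb])
    obtain c1 c2 c3 where c: "v = c1 *\<^sub>R va + c2 *\<^sub>R vb + c3 *\<^sub>R vc" using dec by blast
    have "wa \<bullet> v = c1 * (wa \<bullet> va)" unfolding c by (simp add: inner_add_right o12 o13)
    then have "c1 = 0" using w1v n1 by simp
    have "wb \<bullet> v = c2 * (wb \<bullet> vb)" unfolding c by (simp add: inner_add_right o21 o23)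
    then have "c2 = 0" using w2v n2 by simp
    show "v \<in> span {vc}" unfolding c using \<open>c1 = 0\<close> \<open>c2 = 0\<close>
      by (simp add: span_scale span_base)
  qed
  have U2: "{vc} \<subseteq> unstable_subspace L" using u1[OF ev3 lc] by auto
  have "dim (stable_subspace L) \<le> 2"
    using dim_subset[OF S1] dim_eq_card_independent[OF i12] c2 by simp
  moreover have "dim (stable_subspace L) \<ge> 2"
    using dim_subset[OF S2] dim_eq_card_independent[OF i12] c2 by simp
  moreover have nz3: "vc \<noteq> 0" using n3 by auto
  have "dim (unstable_subspace L) \<le> 1"
    using dim_subset[OF U1] nz3 by simp
  moreover have "dim (unstable_subspace L) \<ge> 1"
    using dim_subset[OF U2] nz3 by simp
  ultimately show ?thesis by simp
qed


definition Mx :: "real \<Rightarrow> real \<Rightarrow> real \<Rightarrow> real \<Rightarrow> real \<Rightarrow> real^3^3" where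
  "Mx a m b al be = vector [vector [0,1,0], vector [a,m,-b], vector [al,0,be]]"

lemma Mx_mult: "Mx a m b al be *v x = vector [x$2, a*x$1 + m*x$2 - b*x$3, al*x$1 + be*x$3]"
  by (simp add: Mx_def vec_eq_iff forall_3 matrix_vector_mult_def sum_3 algebra_simps)

lemma Mx_det: "det (mat z - Mx a m b al be) = (z - be)*(z^2 - m*z - a) + b*al"
  by (simp add: det_3 Mx_def mat_def algebra_simps power2_eq_square)

lemma eig_right:
  assumes "(l-be)*(l^2 - m*l - a) + b*al = 0"
  shows "Mx a m b al be *v vector [l-be, l*(l-be), al] = l *\<^sub>R vector [l-be, l*(l-be), al]"
proof -
  have "a*(l-be) + m*(l*(l-be)) - b*al = l*(l*(l-be))"
    using assms by (simp add: algebra_simps power2_eq_square)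
  moreover have "al*(l-be) + be*al = l*al" by (simp add: algebra_simps)
  ultimately show ?thesis by (simp add: Mx_mult vec_eq_iff forall_3)
qed

lemma eig_left:
  assumes "(l-be)*(l^2 - m*l - a) + b*al = 0"
  shows "vector [(l-m)*al, al, l^2 - m*l - a] \<bullet> (Mx a m b al be *v x)
          = l * (vector [(l-m)*al, al, l^2 - m*l - a] \<bullet> x)"
proof -
  have "- b*al + be*(l^2 - m*l - a) = l*(l^2 - m*l - a)"
    using assms by (simp add: algebra_simps power2_eq_square)
  then have e: "- (b*al*x$3) + be*(l^2 - m*l - a)*x$3 = l*(l^2 - m*l - a)*x$3"
    by (metis (no_types, opaque_lifting) distrib_right mult_minus_left)
  show ?thesis
    using e by (simp add: Mx_mult inner_vec_def sum_3 algebra_simps power2_eq_square)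
qed

lemma eig_pair:
  "vector [(l-m)*al, al, l^2 - m*l - a] \<bullet> (vector [l-be, l*(l-be), al] :: real^3)
    = al * (3*l^2 - 2*(m+be)*l + (m*be - a))"
  by (simp add: inner_vec_def sum_3 algebra_simps power2_eq_square)


lemma cubic_neg_far:
  fixes A B C K :: real
  assumes K: "K \<ge> \<bar>A\<bar> + \<bar>B\<bar> + \<bar>C\<bar> + 1"
  shows "(-K)^3 + A*(-K)^2 + B*(-K) + C < 0" and "K^3 + A*K^2 + B*K + C > 0"
proof -
  have K1: "K \<ge> 1" using K by linarith
  have KK: "K \<le> K^2" using K1 by (simp add: power2_eq_square)
  have a1: "A*K^2 \<le> \<bar>A\<bar>*K^2" by (simp add: mult_right_mono)
  have a2: "-(A*K^2) \<le> \<bar>A\<bar>*K^2" using mult_right_mono[of "-A" "\<bar>A\<bar>" "K^2"] by simp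
  have b1: "\<bar>B*K\<bar> \<le> \<bar>B\<bar>*K^2" using KK K1 by (simp add: abs_mult mult_left_mono)
  have c1: "\<bar>C\<bar> \<le> \<bar>C\<bar>*K^2" using K1 KK by (simp add: mult_le_cancel_left1)
  have s: "(\<bar>A\<bar> + \<bar>B\<bar> + \<bar>C\<bar>) * K^2 < K * K^2"
    using K K1 by (intro mult_strict_right_mono) auto
  have k3: "K^3 = K * K^2" by (simp add: power2_eq_square power3_eq_cube)
  show "(-K)^3 + A*(-K)^2 + B*(-K) + C < 0"
    using a1 b1 c1 s k3 by (simp add: algebra_simps)
  show "K^3 + A*K^2 + B*K + C > 0"
    using a2 b1 c1 s k3 by (simp add: algebra_simps)
qed

lemma cubic_roots:
  fixes A B C z0 :: real
  assumes z0: "z0 < 0" and p1: "z0^3 + A*z0^2 + B*z0 + C > 0" and p2: "C < 0"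
    and p3: "(-z0)^3 + A*(-z0)^2 + B*(-z0) + C < 0"
  shows "\<exists>l1 l2 l3. l1 < z0 \<and> z0 < l2 \<and> l2 < 0 \<and> -z0 < l3 \<and>
     l1^3 + A*l1^2 + B*l1 + C = 0 \<and> l2^3 + A*l2^2 + B*l2 + C = 0 \<and> l3^3 + A*l3^2 + B*l3 + C = 0"
proof -
  define p where "p z = z^3 + A*z^2 + B*z + C" for z
  define K where "K = \<bar>A\<bar> + \<bar>B\<bar> + \<bar>C\<bar> + 1 - z0"
  have Kb: "K \<ge> \<bar>A\<bar> + \<bar>B\<bar> + \<bar>C\<bar> + 1" using z0 by (simp add: K_def)
  have pK1: "p (-K) < 0" using cubic_neg_far(1)[OF Kb] by (simp add: p_def)
  have pK2: "p K > 0" using cubic_neg_far(2)[OF Kb] by (simp add: p_def)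
  have cont: "continuous_on S p" for S unfolding p_def by (intro continuous_intros)
  have "-K \<le> z0" "-z0 \<le> K" using z0 Kb by (auto simp: K_def)
  obtain l1 where l1: "-K \<le> l1" "l1 \<le> z0" "p l1 = 0"
    using IVT'[of p "-K" 0 z0] pK1 p1 \<open>-K \<le> z0\<close> cont by (auto simp: p_def)
  obtain l2 where l2: "z0 \<le> l2" "l2 \<le> 0" "p l2 = 0"
    using IVT2'[of p 0 0 z0] p1 p2 z0 cont by (auto simp: p_def)
  obtain l3 where l3: "-z0 \<le> l3" "l3 \<le> K" "p l3 = 0"
    using IVT'[of p "-z0" 0 K] pK2 p3 \<open>-z0 \<le> K\<close> cont by (auto simp: p_def)
  have "l1 \<noteq> z0" "l2 \<noteq> z0" "l2 \<noteq> 0" "l3 \<noteq> -z0" using l1 l2 l3 p1 p2 p3 by (auto simp: p_def)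
  then show ?thesis using l1 l2 l3 unfolding p_def by (intro exI[of _ l1] exI[of _ l2] exI[of _ l3]) auto
qed

lemma cubic_factor:
  fixes A B C l1 l2 l3 :: real
  assumes e1: "l1^3 + A*l1^2 + B*l1 + C = 0" and e2: "l2^3 + A*l2^2 + B*l2 + C = 0"
    and e3: "l3^3 + A*l3^2 + B*l3 + C = 0"
    and d: "l1 \<noteq> l2" "l1 \<noteq> l3" "l2 \<noteq> l3"
  shows "A = -(l1+l2+l3)" "B = l1*l2 + l1*l3 + l2*l3" "C = -(l1*l2*l3)"
proof -
  have "(l1-l2)*(l1^2+l1*l2+l2^2 + A*(l1+l2) + B) = 0"
    using e1 e2 by (simp add: algebra_simps power2_eq_square power3_eq_cube)
  then have q12: "l1^2+l1*l2+l2^2 + A*(l1+l2) + B = 0" using d by simp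
  have "(l1-l3)*(l1^2+l1*l3+l3^2 + A*(l1+l3) + B) = 0"
    using e1 e3 by (simp add: algebra_simps power2_eq_square power3_eq_cube)
  then have q13: "l1^2+l1*l3+l3^2 + A*(l1+l3) + B = 0" using d by simp
  have "(l2-l3)*(l1+l2+l3+A) = 0"
    using q12 q13 by (simp add: algebra_simps power2_eq_square)
  then show hA: "A = -(l1+l2+l3)" using d by simp
  show hB: "B = l1*l2 + l1*l3 + l2*l3" using q12 hA by (simp add: algebra_simps power2_eq_square)
  show "C = -(l1*l2*l3)" using e1 hA hB by (simp add: algebra_simps power2_eq_square power3_eq_cube)
qed


lemma matrix_case:
  fixes a m b al be t :: real
  assumes ha: "a > 0" and hb: "b \<ge> 0" and hal: "al < 0" and hbe: "be < 0" and ht: "t > 0"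
   and htm: "t^2 + \<bar>m\<bar>*t < a" and hbe2: "-be \<le> t/2"
   and hba: "-(b*al) < t*(a - t^2 - \<bar>m\<bar>*t)/2"
  shows "dim (stable_subspace (\<lambda>h. Mx a m b al be *v h)) = 2 \<and>
         dim (unstable_subspace (\<lambda>h. Mx a m b al be *v h)) = 1 \<and>
         (\<exists>l1 l2 l3 :: real. l1 < l2 \<and> l2 < 0 \<and> 0 < l3 \<and> - l2 < l3 \<and>
            (\<forall>z::real. det (mat z - matrix (\<lambda>h. Mx a m b al be *v h)) = (z - l1) * (z - l2) * (z - l3)))"
proof -
  define A where "A = -(m+be)"
  define B where "B = m*be - a"
  define C where "C = a*be + b*al"
  have peq: "z^3 + A*z^2 + B*z + C = (z-be)*(z^2-m*z-a) + b*al" for z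
    by (simp add: A_def B_def C_def algebra_simps power2_eq_square power3_eq_cube)
  define Q where "Q = a - t^2 - \<bar>m\<bar>*t"
  have Q: "Q > 0" using htm by (simp add: Q_def)
  have mt: "m*t \<le> \<bar>m\<bar>*t" "-(m*t) \<le> \<bar>m\<bar>*t" using ht
    by (simp_all add: mult_right_mono) (metis abs_ge_minus_self mult_minus_left mult_right_mono less_imp_le ht)
  have balle: "b*al \<le> 0" using hb hal by (simp add: mult_nonneg_nonpos)
  have "t/2 * Q \<le> (t+be) * (a - t^2 - m*t)"
    by (rule mult_mono) (use hbe2 mt Q ht in \<open>auto simp: Q_def\<close>)
  then have "(-t-be)*((-t)^2 - m*(-t) - a) + b*al > 0"
    using hba Q_def by (simp add: algebra_simps power2_eq_square)
  then have p1: "(-t)^3 + A*(-t)^2 + B*(-t) + C > 0" using peq by presburger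
  have "a*be < 0" using ha hbe by (simp add: mult_pos_neg)
  then have p2: "C < 0" using balle by (simp add: C_def)
  have "t^2 - m*t - a < 0" using htm mt by linarith
  then have "(t-be)*(t^2 - m*t - a) < 0" using hbe ht by (intro mult_pos_neg) auto
  then have p3: "(-(-t))^3 + A*(-(-t))^2 + B*(-(-t)) + C < 0" using peq[of t] balle by simp
  obtain l1 l2 l3 where l: "l1 < -t" "-t < l2" "l2 < 0" "- (-t) < l3"
    and e1: "l1^3 + A*l1^2 + B*l1 + C = 0" and e2: "l2^3 + A*l2^2 + B*l2 + C = 0"
    and e3: "l3^3 + A*l3^2 + B*l3 + C = 0"
    using cubic_roots[of "-t" A B C] ht p1 p2 p3 by auto
  have d: "l1 \<noteq> l2" "l1 \<noteq> l3" "l2 \<noteq> l3" using l ht by auto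
  note cf = cubic_factor[OF e1 e2 e3 d]
  have det: "det (mat z - matrix (\<lambda>h. Mx a m b al be *v h)) = (z - l1) * (z - l2) * (z - l3)" for z
  proof -
    have "det (mat z - matrix (\<lambda>h. Mx a m b al be *v h)) = z^3 + A*z^2 + B*z + C"
      using peq[of z] by (simp add: Mx_det)
    also have "\<dots> = (z - l1) * (z - l2) * (z - l3)"
      by (simp add: cf algebra_simps power2_eq_square power3_eq_cube)
    finally show ?thesis .
  qed
  have r1: "(l1-be)*(l1^2 - m*l1 - a) + b*al = 0" using peq[of l1] e1 by simp
  have r2: "(l2-be)*(l2^2 - m*l2 - a) + b*al = 0" using peq[of l2] e2 by simp
  have r3: "(l3-be)*(l3^2 - m*l3 - a) + b*al = 0" using peq[of l3] e3 by simp
  have dv: "3*l^2 - 2*(m+be)*l + (m*be - a) = 3*l^2 + 2*A*l + B" for l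
    by (simp add: A_def B_def algebra_simps)
  have pd1: "3*l1^2 + 2*A*l1 + B = (l1-l2)*(l1-l3)"
    by (simp add: cf algebra_simps power2_eq_square)
  have pd2: "3*l2^2 + 2*A*l2 + B = (l2-l1)*(l2-l3)"
    by (simp add: cf algebra_simps power2_eq_square)
  have pd3: "3*l3^2 + 2*A*l3 + B = (l3-l1)*(l3-l2)"
    by (simp add: cf algebra_simps power2_eq_square)
  have nz: "al * ((x - y) * (x - z)) \<noteq> 0" if "x \<noteq> y" "x \<noteq> z" for x y z
    using that hal by simp
  have sub: "dim (stable_subspace (\<lambda>h. Mx a m b al be *v h)) = 2 \<and>
         dim (unstable_subspace (\<lambda>h. Mx a m b al be *v h)) = 1"
  proof (rule subspaces3[where va = "vector [l1-be, l1*(l1-be), al]"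
        and vb = "vector [l2-be, l2*(l2-be), al]" and vc = "vector [l3-be, l3*(l3-be), al]"
        and wa = "vector [(l1-m)*al, al, l1^2 - m*l1 - a]"
        and wb = "vector [(l2-m)*al, al, l2^2 - m*l2 - a]"
        and wc = "vector [(l3-m)*al, al, l3^2 - m*l3 - a]"
        and la = l1 and lb = l2 and lc = l3])
    show "linear (\<lambda>h. Mx a m b al be *v h)" by simp
    show "Mx a m b al be *v vector [l1-be, l1*(l1-be), al] = l1 *\<^sub>R vector [l1-be, l1*(l1-be), al]"
      by (rule eig_right[OF r1])
    show "Mx a m b al be *v vector [l2-be, l2*(l2-be), al] = l2 *\<^sub>R vector [l2-be, l2*(l2-be), al]"
      by (rule eig_right[OF r2])
    show "Mx a m b al be *v vector [l3-be, l3*(l3-be), al] = l3 *\<^sub>R vector [l3-be, l3*(l3-be), al]"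
      by (rule eig_right[OF r3])
    show "\<And>x. vector [(l1-m)*al, al, l1^2 - m*l1 - a] \<bullet> (Mx a m b al be *v x) = l1 * (vector [(l1-m)*al, al, l1^2 - m*l1 - a] \<bullet> x)"
      by (rule eig_left[OF r1])
    show "\<And>x. vector [(l2-m)*al, al, l2^2 - m*l2 - a] \<bullet> (Mx a m b al be *v x) = l2 * (vector [(l2-m)*al, al, l2^2 - m*l2 - a] \<bullet> x)"
      by (rule eig_left[OF r2])
    show "\<And>x. vector [(l3-m)*al, al, l3^2 - m*l3 - a] \<bullet> (Mx a m b al be *v x) = l3 * (vector [(l3-m)*al, al, l3^2 - m*l3 - a] \<bullet> x)"
      by (rule eig_left[OF r3])
    show "vector [(l1-m)*al, al, l1^2 - m*l1 - a] \<bullet> (vector [l1-be, l1*(l1-be), al] :: real^3) \<noteq> 0"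
      unfolding eig_pair dv pd1 using nz d by simp
    show "vector [(l2-m)*al, al, l2^2 - m*l2 - a] \<bullet> (vector [l2-be, l2*(l2-be), al] :: real^3) \<noteq> 0"
      unfolding eig_pair dv pd2 using nz d by simp
    show "vector [(l3-m)*al, al, l3^2 - m*l3 - a] \<bullet> (vector [l3-be, l3*(l3-be), al] :: real^3) \<noteq> 0"
      unfolding eig_pair dv pd3 using nz d by simp
    show "l1 < l2" "l2 < 0" "0 < l3" using l ht by auto
  qed
  have "l1 < l2 \<and> l2 < 0 \<and> 0 < l3 \<and> - l2 < l3" using l ht by auto
  then show ?thesis using sub det by blast
qed


lemma nth_deriv[derivative_intros]: "((\<lambda>X. X $ i) has_derivative (\<lambda>h. h $ i)) F"
  using bounded_linear_imp_has_derivative[OF bounded_linear_vec_nth] .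

lemma vec3_sum: "vec3 a b d = a *\<^sub>R axis 1 1 + b *\<^sub>R axis 2 1 + d *\<^sub>R axis 3 1"
  by (simp add: vec3_def vec_eq_iff forall_3 axis_def)

lemma vec3_nth[simp]: "vec3 a b d $ 1 = a" "vec3 a b d $ 2 = b" "vec3 a b d $ 3 = d"
  by (simp_all add: vec3_def)

lemma field_deriv:
  assumes fz: "f_B q u r = 0" and gz: "g_B q u = 0" and uc: "u \<noteq> c" and D: "D \<noteq> 0"
  shows "(barkley_field r D mu c eps has_derivative (\<lambda>h. Mx
     (-((r + u - 2 - (r + 0.1) * (q - 1)^2) - q * (2 * (r + 0.1) * (q - 1))) / D)
     ((u + mu) / D) (q / D)
     (eps / (u - c) * (2 * (1 - u))) (eps / (u - c) * (-1 - 2 * q)) *v h)) (at (vec3 q 0 u))"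
proof -
  have e: "barkley_field r D mu c eps = (\<lambda>X. (X$2) *\<^sub>R axis 1 1 +
     (((X$3 + mu) * X$2 - (X$1) * (r + X$3 - 2 - (r + 0.1) * (X$1 - 1)^2)) / D) *\<^sub>R axis 2 1 +
     (eps / (X$3 - c) * (2 - X$3 + 2 * X$1 * (1 - X$3))) *\<^sub>R axis 3 1)"
    by (simp add: fun_eq_iff barkley_field_def vec3_sum f_B_def g_B_def)
  note gz' = gz
  have uc': "u - c \<noteq> 0" using uc by simp
  show ?thesis
    unfolding e
    apply (rule has_derivative_eq_rhs)
     apply (rule derivative_eq_intros refl | simp add: uc D)+
    apply (simp only: vec3_nth gz'[unfolded g_B_def] mult_zero_right add_0_right)
    apply (simp add: fun_eq_iff Mx_mult vec_eq_iff forall_3 axis_def)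
    apply (intro allI conjI)
     apply (simp add: divide_simps D uc')
     apply (simp add: algebra_simps power2_eq_square)
    apply (simp add: divide_simps D uc')
    apply (simp add: algebra_simps)
    done
qed


lemma qplus_mono:
  assumes "r > 2/3" "u1 \<le> u2" shows "qplus r u1 \<le> qplus r u2"
proof -
  have "(r + u1 - 2) / (r + 0.1) \<le> (r + u2 - 2) / (r + 0.1)"
    using assms by (intro divide_right_mono) auto
  then show ?thesis unfolding qplus_def by (simp add: real_sqrt_le_mono)
qed

lemma g_zero_iff:
  assumes "u > 1" shows "g_B q u = 0 \<longleftrightarrow> q * (2*(u-1)) = 2 - u"
  unfolding g_B_def by (auto simp: algebra_simps)

lemma ub_ex1:
  assumes r: "r > 2/3"
  shows "\<exists>!u. 6/5 < u \<and> u < 4/3 \<and> g_B (qplus r u) u = 0"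
proof (rule ex_ex1I)
  define h where "h u = g_B (qplus r u) u" for u
  have rp: "r + 0.1 > 0" using r by simp
  have cont: "continuous_on {6/5..4/3} h"
    unfolding h_def g_B_def qplus_def using rp by (intro continuous_intros) auto
  have s1: "sqrt ((r + 6/5 - 2) / (r + 0.1)) < 1"
    using rp by (simp add: divide_less_eq)
  have h1: "h (6/5) > 0" using s1 unfolding h_def g_B_def qplus_def by simp
  have s2: "sqrt ((r + 4/3 - 2) / (r + 0.1)) > 0"
    using rp r by (simp add: divide_pos_pos)
  have h2: "h (4/3) < 0" using s2 unfolding h_def g_B_def qplus_def by simp
  obtain u where u: "6/5 \<le> u" "u \<le> 4/3" "h u = 0"
    using IVT2'[of h "4/3" 0 "6/5"] h1 h2 cont by force
  have "u \<noteq> 6/5" using u(3) h1 by (metis less_irrefl)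
  have "u \<noteq> 4/3" using u(3) h2 by (metis less_irrefl)
  then show "\<exists>u. 6/5 < u \<and> u < 4/3 \<and> g_B (qplus r u) u = 0"
    using u \<open>u \<noteq> 6/5\<close> unfolding h_def by (intro exI[of _ u]) auto
next
  fix x y
  assume x: "6/5 < x \<and> x < 4/3 \<and> g_B (qplus r x) x = 0"
     and y: "6/5 < y \<and> y < 4/3 \<and> g_B (qplus r y) y = 0"
  have main: False if a: "6/5 < a" "a < b" "b < 4/3" "g_B (qplus r a) a = 0" "g_B (qplus r b) b = 0" for a b
  proof -
    have ea: "qplus r a * (2*(a-1)) = 2 - a" using g_zero_iff[of a] a by simp
    have eb: "qplus r b * (2*(b-1)) = 2 - b" using g_zero_iff[of b] a by simp
    have qa: "qplus r a > 0"
    proof (rule ccontr)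
      assume "\<not> qplus r a > 0"
      then have "qplus r a * (2*(a-1)) \<le> 0" using a by (intro mult_nonpos_nonneg) auto
      moreover have "2 - a > 0" using a by simp
      ultimately show False using ea by simp
    qed
    have m: "qplus r a \<le> qplus r b" using qplus_mono[OF r] a by simp
    have "qplus r a * (2*(a-1)) < qplus r a * (2*(b-1))" using qa a by simp
    also have "\<dots> \<le> qplus r b * (2*(b-1))" using m a by (intro mult_right_mono) auto
    finally show False using ea eb a by simp
  qed
  show "x = y"
  proof (rule ccontr)
    assume "x \<noteq> y"
    then have "x < y \<or> y < x" by auto
    then show False using main x y by blast
  qed
qed

lemma ub_props:
  assumes r: "r > 2/3"
  shows "6/5 < u_b r" "u_b r < 4/3" "g_B (q_bp r) (u_b r) = 0"
  using theI'[OF ub_ex1[OF r]] unfolding u_b_def q_bp_def by auto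

lemma qbp_props:
  assumes r: "r > 2/3"
  shows "q_bp r > 1" "f_B (q_bp r) (u_b r) r = 0"
proof -
  note U = ub_props[OF r]
  define Q where "Q = q_bp r"
  define U where "U = u_b r"
  have e: "Q * (2*(U-1)) = 2 - U" using g_zero_iff[of U Q] U by (simp add: Q_def U_def)
  have "2*(U-1) < 2 - U" using U by (simp add: U_def)
  then have "1 * (2*(U-1)) < Q * (2*(U-1))" using e by simp
  then show Q1: "q_bp r > 1" using U by (simp add: Q_def U_def mult_less_cancel_right)
  define w where "w = (r + U - 2) / (r + 0.1)"
  have Qw: "Q = 1 + sqrt w" by (simp add: Q_def q_bp_def qplus_def w_def U_def)
  have "sqrt w > 0" using Q1 Qw Q_def by simp
  then have wp: "w > 0" by simp
  have "(Q - 1)^2 = w" using Qw wp by simp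
  then have "r + U - 2 - (r + 0.1) * (Q - 1)^2 = 0" using r by (simp add: w_def)
  then show "f_B (q_bp r) (u_b r) r = 0" by (simp add: f_B_def Q_def U_def)
qed


lemma choose_t: "(a::real) > 0 \<Longrightarrow> \<exists>t>0. t^2 + \<bar>m\<bar>*t < a"
proof -
  assume a: "a > 0"
  define t where "t = a / (\<bar>m\<bar> + a + 2)"
  have t0: "t > 0" using a by (simp add: t_def)
  have t1: "t < 1" using a by (simp add: t_def)
  have "t^2 \<le> t" using t0 t1 by (simp add: power2_eq_square mult_le_cancel_right1 less_imp_le)
  moreover have "t * (1 + \<bar>m\<bar>) < a"
  proof -
    have "t * (1 + \<bar>m\<bar>) = a * (1 + \<bar>m\<bar>) / (\<bar>m\<bar> + a + 2)" by (simp add: t_def)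
    also have "\<dots> < a" using a by (simp add: divide_less_eq)
    finally show ?thesis .
  qed
  ultimately have "t^2 + \<bar>m\<bar>*t < a" by (simp add: algebra_simps)
  then show ?thesis using t0 by blast
qed

lemma choose_eps:
  fixes K1 K2 T1 T2 :: real
  assumes "K1 < 0" "K2 \<le> 0" "T1 > 0" "T2 > 0"
  shows "\<exists>e0>0. \<forall>eps. 0 < eps \<and> eps < e0 \<longrightarrow> -(eps*K1) \<le> T1 \<and> -(eps*K2) < T2"
proof (intro exI[of _ "min (T1/(-K1)) (T2/(1-K2))"] conjI allI impI)
  show "0 < min (T1/(-K1)) (T2/(1-K2))" using assms by (simp add: divide_pos_neg)
  fix eps assume e: "0 < eps \<and> eps < min (T1/(-K1)) (T2/(1-K2))"
  then have "eps < T1/(-K1)" by simp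
  then have "eps * (-K1) < (T1/(-K1)) * (-K1)" using assms(1) by (intro mult_strict_right_mono) auto
  then have "eps * (-K1) < T1" using assms(1) by simp
  then show "-(eps*K1) \<le> T1" by simp
  have "eps < T2/(1-K2)" using e by simp
  then have "eps * (1-K2) < (T2/(1-K2)) * (1-K2)" using assms(2) by (intro mult_strict_right_mono) auto
  then have "eps * (1-K2) < T2" using assms(2) by simp
  moreover have "eps * (-K2) \<le> eps * (1-K2)" using e by (intro mult_left_mono) auto
  ultimately show "-(eps*K2) < T2" by simp
qed

lemma point_ok:
  fixes r D mu c q u :: real
  assumes fz: "f_B q u r = 0" and gz: "g_B q u = 0" and uc: "u > c" and u1: "u > 1"
    and q0: "q \<ge> 0" and D: "D > 0"
    and apos: "-((r + u - 2 - (r + 0.1) * (q - 1)^2) - q * (2 * (r + 0.1) * (q - 1))) / D > 0"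
  shows "\<exists>e0>0. \<forall>eps. 0 < eps \<and> eps < e0 \<longrightarrow>
              barkley_field r D mu c eps (vec3 q 0 u) = 0 \<and>
              (\<exists>L. (barkley_field r D mu c eps has_derivative L) (at (vec3 q 0 u)) \<and>
                   dim (stable_subspace L) = 2 \<and> dim (unstable_subspace L) = 1 \<and>
                   (\<exists>l1 l2 l3 :: real. l1 < l2 \<and> l2 < 0 \<and> 0 < l3 \<and> - l2 < l3 \<and>
                      (\<forall>z::real. det (mat z - matrix L) = (z - l1) * (z - l2) * (z - l3))))"
proof -
  define a where "a = -((r + u - 2 - (r + 0.1) * (q - 1)^2) - q * (2 * (r + 0.1) * (q - 1))) / D"
  define m where "m = (u + mu) / D"
  define b where "b = q / D"
  have a0: "a > 0" using apos by (simp add: a_def)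
  obtain t where t: "t > 0" "t^2 + \<bar>m\<bar>*t < a" using choose_t[OF a0] by blast
  define K1 where "K1 = (-1 - 2*q) / (u - c)"
  define K2 where "K2 = b * (2*(1-u)) / (u - c)"
  have K1: "K1 < 0" using uc q0 by (simp add: K1_def divide_neg_pos)
  have b0: "b \<ge> 0" using q0 D by (simp add: b_def)
  have "b * (2*(1-u)) \<le> 0" using b0 u1 by (intro mult_nonneg_nonpos) auto
  then have K2: "K2 \<le> 0" using uc by (simp add: K2_def divide_nonpos_pos)
  have T2: "t*(a - t^2 - \<bar>m\<bar>*t)/2 > 0" using t by simp
  obtain e0 where e0: "e0 > 0" and he: "\<And>eps. 0 < eps \<and> eps < e0 \<Longrightarrow>
      -(eps*K1) \<le> t/2 \<and> -(eps*K2) < t*(a - t^2 - \<bar>m\<bar>*t)/2"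
    using choose_eps[OF K1 K2 _ T2, of "t/2"] t by auto
  show ?thesis
  proof (intro exI[of _ e0] conjI allI impI e0)
    fix eps assume eps: "0 < eps \<and> eps < e0"
    define al where "al = eps / (u - c) * (2 * (1 - u))"
    define be where "be = eps / (u - c) * (-1 - 2 * q)"
    have al: "al < 0" unfolding al_def using eps uc u1 by (intro mult_pos_neg) auto
    have be: "be < 0" unfolding be_def using eps uc q0 by (intro mult_pos_neg) auto
    have beK: "be = eps * K1" by (simp add: be_def K1_def)
    have balK: "b * al = eps * K2" by (simp add: al_def K2_def)
    have c1: "-be \<le> t/2" using he[OF eps] beK by simp
    have c2: "-(b*al) < t*(a - t^2 - \<bar>m\<bar>*t)/2" using he[OF eps] balK by simp
    note mc = matrix_case[OF a0 b0 al be t c1 c2]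
    have dv: "(barkley_field r D mu c eps has_derivative (\<lambda>h. Mx a m b al be *v h)) (at (vec3 q 0 u))"
      unfolding a_def m_def b_def al_def be_def
      by (rule field_deriv[OF fz gz]) (use uc D in auto)
    show "barkley_field r D mu c eps (vec3 q 0 u) = 0"
      using fz gz by (simp add: barkley_field_def vec3_def vec_eq_iff)
    show "\<exists>L. (barkley_field r D mu c eps has_derivative L) (at (vec3 q 0 u)) \<and>
                   dim (stable_subspace L) = 2 \<and> dim (unstable_subspace L) = 1 \<and>
                   (\<exists>l1 l2 l3 :: real. l1 < l2 \<and> l2 < 0 \<and> 0 < l3 \<and> - l2 < l3 \<and>
                      (\<forall>z::real. det (mat z - matrix L) = (z - l1) * (z - l2) * (z - l3)))"
      using dv mc by blast
  qed
qed


theorem corollary1: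
  fixes r D mu c :: real
  assumes "r > 2/3" and "D > 0" and "c < u_b r"
  shows "\<exists>eps0>0. \<forall>eps. 0 < eps \<and> eps < eps0 \<longrightarrow>
           (\<forall>X \<in> {X1, X2 r}.
              barkley_field r D mu c eps X = 0 \<and>
              (\<exists>L. (barkley_field r D mu c eps has_derivative L) (at X) \<and>
                   dim (stable_subspace L) = 2 \<and> dim (unstable_subspace L) = 1 \<and>
                   (\<exists>l1 l2 l3 :: real. l1 < l2 \<and> l2 < 0 \<and> 0 < l3 \<and> - l2 < l3 \<and>
                      (\<forall>z::real. det (mat z - matrix L) = (z - l1) * (z - l2) * (z - l3)))))"
proof -
  note U = ub_props[OF assms(1)]
  note Qp = qbp_props[OF assms(1)]
  have c2: "c < 2" using U(2) assms(3) by simp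
  obtain e1 where e1: "e1 > 0" and h1: "\<And>eps. 0 < eps \<and> eps < e1 \<Longrightarrow>
              barkley_field r D mu c eps (vec3 0 0 2) = 0 \<and>
              (\<exists>L. (barkley_field r D mu c eps has_derivative L) (at (vec3 0 0 2)) \<and>
                   dim (stable_subspace L) = 2 \<and> dim (unstable_subspace L) = 1 \<and>
                   (\<exists>l1 l2 l3 :: real. l1 < l2 \<and> l2 < 0 \<and> 0 < l3 \<and> - l2 < l3 \<and>
                      (\<forall>z::real. det (mat z - matrix L) = (z - l1) * (z - l2) * (z - l3))))"
  proof -
    have "\<exists>e0>0. \<forall>eps. 0 < eps \<and> eps < e0 \<longrightarrow>
              barkley_field r D mu c eps (vec3 0 0 2) = 0 \<and>
              (\<exists>L. (barkley_field r D mu c eps has_derivative L) (at (vec3 0 0 2)) \<and>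
                   dim (stable_subspace L) = 2 \<and> dim (unstable_subspace L) = 1 \<and>
                   (\<exists>l1 l2 l3 :: real. l1 < l2 \<and> l2 < 0 \<and> 0 < l3 \<and> - l2 < l3 \<and>
                      (\<forall>z::real. det (mat z - matrix L) = (z - l1) * (z - l2) * (z - l3))))"
      by (rule point_ok) (use c2 assms(2) in \<open>auto simp: f_B_def g_B_def\<close>)
    then show ?thesis using that by blast
  qed
  define Q where "Q = q_bp r"
  define V where "V = u_b r"
  have fQ: "f_B Q V r = 0" and gQ: "g_B Q V = 0" and Q1: "Q > 1" and V1: "V > 1" and cV: "c < V"
    using U Qp assms(3) by (auto simp: Q_def V_def)
  have br: "r + V - 2 - (r + 0.1) * (Q - 1)^2 = 0" using fQ Q1 by (simp add: f_B_def)
  have pos: "Q * (2 * (r + 0.1) * (Q - 1)) > 0" using Q1 assms(1) by simp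
  have apos: "-((r + V - 2 - (r + 0.1) * (Q - 1)^2) - Q * (2 * (r + 0.1) * (Q - 1))) / D > 0"
    unfolding br using pos assms(2) by simp
  obtain e2 where e2: "e2 > 0" and h2: "\<And>eps. 0 < eps \<and> eps < e2 \<Longrightarrow>
              barkley_field r D mu c eps (vec3 Q 0 V) = 0 \<and>
              (\<exists>L. (barkley_field r D mu c eps has_derivative L) (at (vec3 Q 0 V)) \<and>
                   dim (stable_subspace L) = 2 \<and> dim (unstable_subspace L) = 1 \<and>
                   (\<exists>l1 l2 l3 :: real. l1 < l2 \<and> l2 < 0 \<and> 0 < l3 \<and> - l2 < l3 \<and>
                      (\<forall>z::real. det (mat z - matrix L) = (z - l1) * (z - l2) * (z - l3))))"
    using point_ok[OF fQ gQ cV V1 _ assms(2) apos, of mu] Q1 by auto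
  have X1e: "X1 = vec3 0 0 2" by (simp add: X1_def)
  have X2e: "X2 r = vec3 Q 0 V" by (simp add: X2_def Q_def V_def)
  show ?thesis
  proof (rule exI[of _ "min e1 e2"], rule conjI)
    show "0 < min e1 e2" using e1 e2 by simp
  next
    show "\<forall>eps. 0 < eps \<and> eps < min e1 e2 \<longrightarrow>
           (\<forall>X \<in> {X1, X2 r}.
              barkley_field r D mu c eps X = 0 \<and>
              (\<exists>L. (barkley_field r D mu c eps has_derivative L) (at X) \<and>
                   dim (stable_subspace L) = 2 \<and> dim (unstable_subspace L) = 1 \<and>
                   (\<exists>l1 l2 l3 :: real. l1 < l2 \<and> l2 < 0 \<and> 0 < l3 \<and> - l2 < l3 \<and>
                      (\<forall>z::real. det (mat z - matrix L) = (z - l1) * (z - l2) * (z - l3)))))"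
    proof (intro allI impI ballI)
    fix eps X assume eps: "0 < eps \<and> eps < min e1 e2" and X: "X \<in> {X1, X2 r}"
    have ep1: "0 < eps \<and> eps < e1" and ep2: "0 < eps \<and> eps < e2" using eps by auto
    from X have "X = vec3 0 0 2 \<or> X = vec3 Q 0 V" using X1e X2e by auto
    then show "barkley_field r D mu c eps X = 0 \<and>
              (\<exists>L. (barkley_field r D mu c eps has_derivative L) (at X) \<and>
                   dim (stable_subspace L) = 2 \<and> dim (unstable_subspace L) = 1 \<and>
                   (\<exists>l1 l2 l3 :: real. l1 < l2 \<and> l2 < 0 \<and> 0 < l3 \<and> - l2 < l3 \<and>
                      (\<forall>z::real. det (mat z - matrix L) = (z - l1) * (z - l2) * (z - l3))))"
      using h1[OF ep1] h2[OF ep2] by auto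
    qed
  qed
qed


end
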